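(* Let $t,k\ge2$ be integers with $(t+1)\mid(k+1)$. Then $N(tk+i,k)=N(tk-i,k)=t-i$ for every integer $0\le i\le t$.
   Context: For $n>k\ge1$, $N(n,k)$ is the nullity of the $n\times n$ skew-symmetric Toeplitz matrix $A(n,k)$ whose first $k$ superdiagonals have all entries $1$ and whose remaining superdiagonals have all entries $0$. This nullity depends only on $n\bmod (k^2+k)$, and $N(n,k)$ is defined for every integer $n$ as $N(n',k)$ for any $n'>k$ with $n'\equiv n\pmod{k^2+k}$. *)

theory Defs
  imports "Jordan_Normal_Form.Matrix_Kernel"
begin

definition A_mat :: "nat \<Rightarrow> nat \<Rightarrow> real mat" where
  "A_mat n k = mat n n (\<lambda>(i, j).
      if i < j \<and> j - i \<le> k then 1
      else if j < i \<and> i - j \<le> k then -1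
      else 0)"

definition nullity_A :: "nat \<Rightarrow> nat \<Rightarrow> nat" where
  "nullity_A n k = kernel_dim (A_mat n k)"

text \<open>N(n,k) for every integer n: for n > k it is the nullity of A(n,k); otherwise it is the
  nullity of A(n',k) for the representative n' = (n mod (k^2+k)) + (k^2+k) > k, which is
  congruent to n modulo k^2+k (per the context, the choice of n' does not matter).\<close>
definition N :: "int \<Rightarrow> nat \<Rightarrow> nat" where
  "N n k = (if n > int k then nullity_A (nat n) k
            else nullity_A (nat (n mod int (k^2 + k) + int (k^2 + k))) k)"

end

theory Submission
  imports Defs
begin

lemma periodic_sum:
  fixes g :: "nat \<Rightarrow> real"
  shows "(\<Sum>j\<in>{a..<a+m}. g (j mod m)) = (\<Sum>j<m. g j)"
proof (induction a)
  case 0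
  then show ?case by (simp add: lessThan_atLeast0)
next
  case (Suc a)
  show ?case
  proof (cases "m = 0")
    case True then show ?thesis by simp
  next
    case False
    have "(\<Sum>j\<in>{Suc a..<Suc a+m}. g (j mod m)) = (\<Sum>j\<in>{a..<a+m}. g (j mod m)) - g (a mod m) + g ((a+m) mod m)"
      using False by (simp add: sum.atLeast_Suc_lessThan sum.atLeastLessThan_Suc)
    also have "g ((a+m) mod m) = g (a mod m)" by simp
    finally show ?thesis using Suc by simp
  qed
qed

definition zs :: "nat \<Rightarrow> (nat \<Rightarrow> real) \<Rightarrow> nat \<Rightarrow> real" where
  "zs k p j = p (j mod k + 1) - p ((j + 1) mod (k + 1))"

lemma zs_window:
  assumes "k > 0"
  shows "(\<Sum>j\<in>{a..<a+k}. zs k p j) = (\<Sum>j<k. p (j+1)) - (\<Sum>j<k+1. p j) + p (a mod (k+1))"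
proof -
  have s1: "(\<Sum>j\<in>{a..<a+k}. p (j mod k + 1)) = (\<Sum>j<k. p (j+1))"
    using periodic_sum[where g="\<lambda>j. p (j+1)" and a=a and m=k] by simp
  have "(\<Sum>j\<in>{a..<a+k}. p ((j+1) mod (k+1))) = (\<Sum>j\<in>{Suc a..<Suc a+k}. p (j mod (k+1)))"
    using sum.shift_bounds_Suc_ivl[where g="\<lambda>j. p (j mod (k+1))" and m=a and n="a+k"] by simp
  also have "\<dots> = (\<Sum>j\<in>{Suc a..<Suc a+(k+1)}. p (j mod (k+1))) - p ((Suc a + k) mod (k+1))"
    by (simp add: sum.atLeastLessThan_Suc)
  also have "(\<Sum>j\<in>{Suc a..<Suc a+(k+1)}. p (j mod (k+1))) = (\<Sum>j<k+1. p j)"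
    by (rule periodic_sum)
  also have "(Suc a + k) mod (k+1) = a mod (k+1)"
    by (metis add.commute add_Suc_right mod_add_self2 plus_1_eq_Suc)
  finally have s2: "(\<Sum>j\<in>{a..<a+k}. p ((j+1) mod (k+1))) = (\<Sum>j<k+1. p j) - p (a mod (k+1))" .
  show ?thesis unfolding zs_def sum_subtractf s1 s2 by simp
qed

lemma zs_window_eq:
  assumes "k > 0"
  shows "(\<Sum>j\<in>{r+k+1..<r+k+1+k}. zs k p j) = (\<Sum>j\<in>{r..<r+k}. zs k p j)"
proof -
  have "(r+k+1) mod (k+1) = r mod (k+1)" by (metis add.assoc mod_add_self2)
  then show ?thesis using zs_window[OF assms, where a="r+k+1" and p=p] zs_window[OF assms, where a=r and p=p] by simp
qed

definition Fext :: "nat \<Rightarrow> nat \<Rightarrow> real vec \<Rightarrow> nat \<Rightarrow> real" where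
  "Fext n k v j = (if k \<le> j \<and> j < n + k then v $ (j - k) else 0)"

lemma Fext_sum:
  "(\<Sum>j<n+2*k. g j * Fext n k v j) = (\<Sum>j<n. g (j+k) * v $ j)"
proof -
  have "(\<Sum>j<n+2*k. g j * Fext n k v j) = (\<Sum>j\<in>{k..<n+k}. g j * Fext n k v j)"
    by (rule sum.mono_neutral_right) (auto simp: Fext_def)
  also have "\<dots> = (\<Sum>j\<in>{0+k..<n+k}. g j * v $ (j - k))"
    by (rule sum.cong) (auto simp: Fext_def)
  also have "\<dots> = (\<Sum>j\<in>{0..<n}. g (j+k) * v $ j)"
    by (subst sum.shift_bounds_nat_ivl) simp
  finally show ?thesis by (simp add: lessThan_atLeast0)
qed

lemma Fext_window:
  assumes "W \<subseteq> {..<n+2*k}"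
  shows "(\<Sum>j\<in>W. Fext n k v j) = (\<Sum>j<n. (if j + k \<in> W then 1 else 0) * v $ j)"
proof -
  have "(\<Sum>j\<in>W. Fext n k v j) = (\<Sum>j<n+2*k. (if j \<in> W then 1 else 0) * Fext n k v j)"
  proof -
    have "(\<Sum>j<n+2*k. (if j \<in> W then 1 else 0) * Fext n k v j) = (\<Sum>j<n+2*k. (if j \<in> W then Fext n k v j else 0))"
      by (rule sum.cong) auto
    also have "\<dots> = sum (Fext n k v) ({..<n+2*k} \<inter> W)" by (simp add: sum.inter_restrict)
    also have "{..<n+2*k} \<inter> W = W" using assms by auto
    finally show ?thesis by simp
  qed
  also have "\<dots> = (\<Sum>j<n. (if j + k \<in> W then 1 else 0) * v $ j)"
    by (rule Fext_sum)
  finally show ?thesis .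
qed

lemma row_lemma:
  assumes r: "r < n" and v: "v \<in> carrier_vec n"
  shows "(A_mat n k *\<^sub>v v) $ r = (\<Sum>j\<in>{r+k+1..<r+k+1+k}. Fext n k v j) - (\<Sum>j\<in>{r..<r+k}. Fext n k v j)"
proof -
  have "(A_mat n k *\<^sub>v v) $ r = (\<Sum>j<n. (A_mat n k) $$ (r,j) * v $ j)"
    using r v by (auto simp: A_mat_def scalar_prod_def lessThan_atLeast0)
  also have "\<dots> = (\<Sum>j<n. ((if j + k \<in> {r+k+1..<r+k+1+k} then 1 else 0) - (if j + k \<in> {r..<r+k} then 1 else 0)) * v $ j)"
    by (rule sum.cong) (auto simp: A_mat_def r)
  also have "\<dots> = (\<Sum>j<n. (if j + k \<in> {r+k+1..<r+k+1+k} then 1 else 0) * v $ j) - (\<Sum>j<n. (if j + k \<in> {r..<r+k} then 1 else 0) * v $ j)"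
    by (simp add: left_diff_distrib sum_subtractf)
  also have "\<dots> = (\<Sum>j\<in>{r+k+1..<r+k+1+k}. Fext n k v j) - (\<Sum>j\<in>{r..<r+k}. Fext n k v j)"
    using r by (subst (1 2) Fext_window) auto
  finally show ?thesis .
qed

definition condn :: "nat \<Rightarrow> nat \<Rightarrow> (nat \<Rightarrow> real) \<Rightarrow> bool" where
  "condn n k p \<longleftrightarrow> (\<forall>j. n \<le> j \<longrightarrow> j < n + k \<longrightarrow> p (j mod k + 1) = p (j mod (k+1)))"

definition zv :: "nat \<Rightarrow> (nat \<Rightarrow> real) \<Rightarrow> nat \<Rightarrow> real" where
  "zv k p j = p (j mod k + 1) - p (j mod (k+1))"

lemma zs_zv: assumes "k \<le> j" shows "zs k p j = zv k p (j - k)"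
proof -
  have "j mod k = (j - k) mod k" using assms by (simp add: le_mod_geq)
  moreover have "(j + 1) mod (k+1) = (j - k) mod (k+1)"
  proof -
    have "j + 1 = (j - k) + (k+1)" using assms by simp
    then show ?thesis by (metis mod_add_self2)
  qed
  ultimately show ?thesis unfolding zs_def zv_def by simp
qed

lemma zs_small: assumes "j < k" shows "zs k p j = 0"
  using assms unfolding zs_def by simp

lemma A_carrier: "A_mat n k \<in> carrier_mat n n" by (simp add: A_mat_def)

lemma lemmaA:
  assumes k: "k > 0" and c: "condn n k p"
  shows "vec n (zv k p) \<in> mat_kernel (A_mat n k)"
proof (rule mat_kernelI[OF A_carrier])
  show "vec n (zv k p) \<in> carrier_vec n" by simp
  let ?v = "vec n (zv k p)"
  have F: "Fext n k ?v j = zs k p j" if "j < n + 2*k" for j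
  proof (cases "j < k")
    case True then show ?thesis by (simp add: Fext_def zs_small)
  next
    case False
    then have jk: "k \<le> j" by simp
    show ?thesis
    proof (cases "j < n + k")
      case True then show ?thesis using jk by (simp add: Fext_def zs_zv)
    next
      case False
      have "p ((j-k) mod k + 1) = p ((j-k) mod (k+1))"
        using c[unfolded condn_def, rule_format, of "j-k"] False that jk by simp
      then show ?thesis using False jk by (simp add: Fext_def zs_zv zv_def)
    qed
  qed
  show "A_mat n k *\<^sub>v ?v = 0\<^sub>v n"
  proof (rule eq_vecI)
    fix r assume r: "r < dim_vec (0\<^sub>v n :: real vec)"
    then have r: "r < n" by simp
    have "(A_mat n k *\<^sub>v ?v) $ r = (\<Sum>j\<in>{r+k+1..<r+k+1+k}. Fext n k ?v j) - (\<Sum>j\<in>{r..<r+k}. Fext n k ?v j)"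
      by (rule row_lemma[OF r]) simp
    also have "\<dots> = (\<Sum>j\<in>{r+k+1..<r+k+1+k}. zs k p j) - (\<Sum>j\<in>{r..<r+k}. zs k p j)"
      using r by (intro arg_cong2[where f="(-)"] sum.cong refl F) auto
    also have "\<dots> = 0" using zs_window_eq[OF k] by simp
    finally show "(A_mat n k *\<^sub>v ?v) $ r = 0\<^sub>v n $ r" using r by simp
  qed (simp add: A_mat_def)
qed



lemma lemmaB:
  assumes k: "k > 0" and nk: "k < n" and v: "v \<in> mat_kernel (A_mat n k)"
  defines "p \<equiv> (\<lambda>a. \<Sum>j<a. v $ j)"
  shows "\<forall>j<n. v $ j = zv k p j" and "condn n k p"
proof -
  have vc: "v \<in> carrier_vec n" and Av: "A_mat n k *\<^sub>v v = 0\<^sub>v n"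
    using mat_kernelD[OF A_carrier v] by auto
  have row: "(\<Sum>j\<in>{r+k+1..<r+k+1+k}. Fext n k v j) = (\<Sum>j\<in>{r..<r+k}. Fext n k v j)" if "r < n" for r
  proof -
    have "(A_mat n k *\<^sub>v v) $ r = 0" using Av that by simp
    then show ?thesis using row_lemma[OF that vc] by simp
  qed
  have F: "j < n + 2*k \<longrightarrow> Fext n k v j = zs k p j" for j
  proof (induction j rule: less_induct)
    case (less j)
    show ?case
    proof
      assume jn: "j < n + 2*k"
      show "Fext n k v j = zs k p j"
      proof (cases "j < k")
        case True then show ?thesis by (simp add: Fext_def zs_small)
      next
        case False
        then have jk: "k \<le> j" by simp
        show ?thesis
        proof (cases "j < 2*k")
          case True
          then have j1: "j - k < k" by simp
          have "zs k p j = zv k p (j - k)" using jk by (rule zs_zv)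
          also have "\<dots> = p (j - k + 1) - p (j - k)"
            using j1 by (simp add: zv_def)
          also have "\<dots> = v $ (j - k)" unfolding p_def by simp
          finally show ?thesis using jk True nk by (simp add: Fext_def)
        next
          case False
          define r where "r = j - 2*k"
          have r: "r < n" and jr: "j = r + k + k" using False jn unfolding r_def by auto
          have split: "(\<Sum>j\<in>{r+k+1..<r+k+1+k}. f j) = (\<Sum>j\<in>{r+k+1..<r+k+k}. f j) + f (r+k+k)"
            for f :: "nat \<Rightarrow> real"
          proof -
            have "r+k+1+k = Suc (r+k+k)" by simp
            moreover have "r+k+1 \<le> r+k+k" using k by simp
            ultimately show ?thesis by (simp only: sum.atLeastLessThan_Suc)
          qed
          have IH1: "(\<Sum>j\<in>{r+k+1..<r+k+k}. Fext n k v j) = (\<Sum>j\<in>{r+k+1..<r+k+k}. zs k p j)"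
          proof (rule sum.cong[OF refl])
            fix x assume "x \<in> {r+k+1..<r+k+k}"
            then have "x < j" "x < n + 2*k" using jr jn by auto
            then show "Fext n k v x = zs k p x" using less.IH by blast
          qed
          have IH2: "(\<Sum>j\<in>{r..<r+k}. Fext n k v j) = (\<Sum>j\<in>{r..<r+k}. zs k p j)"
          proof (rule sum.cong[OF refl])
            fix x assume "x \<in> {r..<r+k}"
            then have "x < j" "x < n + 2*k" using jr jn k by auto
            then show "Fext n k v x = zs k p x" using less.IH by blast
          qed
          have "Fext n k v j = (\<Sum>j\<in>{r..<r+k}. zs k p j) - (\<Sum>j\<in>{r+k+1..<r+k+k}. zs k p j)"
            using row[OF r] split[of "Fext n k v"] IH1 IH2 jr by simp
          also have "\<dots> = zs k p j"
            using zs_window_eq[OF k, where r=r and p=p] split[of "zs k p"] jr by simp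
          finally show ?thesis .
        qed
      qed
    qed
  qed
  show "\<forall>j<n. v $ j = zv k p j"
  proof (intro allI impI)
    fix j assume j: "j < n"
    have "Fext n k v (j + k) = zs k p (j + k)" using F[of "j+k"] j by simp
    moreover have "zs k p (j + k) = zv k p j" using zs_zv[of k "j+k" p] by simp
    ultimately show "v $ j = zv k p j" using j by (simp add: Fext_def)
  qed
  show "condn n k p" unfolding condn_def
  proof (intro allI impI)
    fix j assume j: "n \<le> j" "j < n + k"
    have "Fext n k v (j + k) = zs k p (j + k)" using F[of "j+k"] j by simp
    moreover have "zs k p (j + k) = zv k p j" using zs_zv[of k "j+k" p] by simp
    ultimately have "zv k p j = 0" using j by (simp add: Fext_def)
    then show "p (j mod k + 1) = p (j mod (k + 1))" unfolding zv_def by simp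
  qed
qed

lemma generic_dim:
  fixes n k T f e :: nat
  assumes k: "k > 0" and nk: "k < n" and T: "e < T" "T \<le> k + 1" and f: "1 \<le> f"
  and C1: "\<And>p. p 0 = 0 \<Longrightarrow> condn n k p \<Longrightarrow> (\<forall>a\<le>k. p a = p (a mod T)) \<and> (\<forall>d<T. (d < f \<or> e < d) \<longrightarrow> p d = 0)"
  and C2: "\<And>h. (\<forall>d. (d < f \<or> e < d) \<longrightarrow> h d = 0) \<Longrightarrow> condn n k (\<lambda>a. h (a mod T))"
  shows "kernel_dim (A_mat n k) = e + 1 - f"
proof -
  interpret K: kernel n n "A_mat n k" by (unfold_locales) (rule A_carrier)
  define hh where "hh c d = (if c \<le> d \<and> d \<le> e then 1 else 0 :: real)" for c d :: nat
  define w where "w c = vec n (zv k (\<lambda>a. hh c (a mod T)))" for c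
  define W where "W = w ` {f..e}"
  have wker: "w c \<in> mat_kernel (A_mat n k)" if "c \<in> {f..e}" for c
    unfolding w_def
  proof (rule lemmaA[OF k], rule C2, intro allI impI)
    fix d assume "d < f \<or> e < d" then show "hh c d = 0" using that unfolding hh_def by auto
  qed
  have Wker: "W \<subseteq> mat_kernel (A_mat n k)" unfolding W_def using wker by auto
  have zvsmall: "zv k q (c - 1) = q c - q (c - 1)" if "1 \<le> c" "c \<le> k" for q c
  proof -
    have "(c - 1) mod k = c - 1" "(c - 1) mod (k+1) = c - 1" using that by auto
    then show ?thesis unfolding zv_def using that by simp
  qed
  have coord: "w c $ (c' - 1) = (if c = c' then 1 else 0)" if "c \<in> {f..e}" "c' \<in> {f..e}" for c c'
  proof -
    have c': "1 \<le> c'" "c' \<le> k" "c' - 1 < n" "c' < T" using that f T nk by auto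
    have "w c $ (c' - 1) = hh c (c' mod T) - hh c ((c' - 1) mod T)"
      unfolding w_def using c' zvsmall[of c'] by simp
    also have "\<dots> = hh c c' - hh c (c' - 1)" using c' by simp
    also have "\<dots> = (if c = c' then 1 else 0)" using that c' unfolding hh_def by auto
    finally show ?thesis .
  qed
  have winj: "inj_on w {f..e}"
  proof (rule inj_onI)
    fix c c' assume "c \<in> {f..e}" "c' \<in> {f..e}" "w c = w c'"
    then show "c = c'" using coord[of c c'] coord[of c' c'] by (auto split: if_splits)
  qed
  have uniq: "v = 0\<^sub>v n" if v: "v \<in> mat_kernel (A_mat n k)" and z: "\<forall>c\<in>{f..e}. v $ (c - 1) = 0" for v
  proof -
    define p where "p = (\<lambda>a. \<Sum>j<a. v $ j)"
    have vz: "\<forall>j<n. v $ j = zv k p j" and cn: "condn n k p"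
      using lemmaB[OF k nk v] unfolding p_def by auto
    have p0: "p 0 = 0" unfolding p_def by simp
    have Ca: "\<And>a. a \<le> k \<Longrightarrow> p a = p (a mod T)" and Cb: "\<And>d. d < T \<Longrightarrow> d < f \<or> e < d \<Longrightarrow> p d = 0"
      using C1[OF p0 cn] by auto
    have pd: "d < T \<longrightarrow> p d = 0" for d
    proof (induction d)
      case 0 then show ?case using Cb f T by simp
    next
      case (Suc d)
      show ?case
      proof
        assume dT: "Suc d < T"
        show "p (Suc d) = 0"
        proof (cases "Suc d < f \<or> e < Suc d")
          case True then show ?thesis using Cb dT by simp
        next
          case False
          then have "Suc d \<in> {f..e}" by auto
          then have "v $ d = 0" using z by force
          moreover have "v $ d = p (Suc d) - p d"
            using vz zvsmall[of "Suc d" p] dT T nk by auto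
          ultimately show ?thesis using Suc dT by auto
        qed
      qed
    qed
    have pa: "p a = 0" if "a \<le> k" for a
    proof -
      have "0 < T" using T by simp
      then have "a mod T < T" by simp
      then show ?thesis using Ca[OF that] pd by simp
    qed
    show ?thesis
    proof (rule eq_vecI)
      show "dim_vec v = dim_vec (0\<^sub>v n :: real vec)" using mat_kernelD[OF A_carrier v] by simp
      fix j assume "j < dim_vec (0\<^sub>v n :: real vec)"
      then have j: "j < n" by simp
      have "j mod k + 1 \<le> k" "j mod (k+1) \<le> k" using k by (auto simp: Suc_leI)
      then show "v $ j = 0\<^sub>v n $ j" using vz j pa unfolding zv_def by simp
    qed
  qed
  have basis: "K.basis W"
    unfolding K.Ker.basis_def
  proof (intro conjI)
    show "W \<subseteq> mat_kernel (A_mat n k)" by (rule Wker)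
    show "K.lin_indpt W"
    proof (rule K.Ker.finite_lin_indpt2)
      show "finite W" unfolding W_def by simp
      show "W \<subseteq> mat_kernel (A_mat n k)" by (rule Wker)
      fix a assume a: "a \<in> W \<rightarrow> UNIV" and lc: "K.lincomb a W = 0\<^sub>v n"
      show "\<forall>x\<in>W. a x = 0"
      proof
        fix x assume "x \<in> W"
        then obtain c where c: "c \<in> {f..e}" and x: "x = w c" unfolding W_def by auto
        have cn: "c - 1 < n" using c T nk by auto
        have "0 = K.lincomb a W $ (c - 1)" using lc cn by simp
        also have "\<dots> = (\<Sum>y\<in>W. a y * y $ (c - 1))" by (rule K.lincomb_index[OF cn Wker])
        also have "\<dots> = (\<Sum>c'\<in>{f..e}. a (w c') * w c' $ (c - 1))"
          unfolding W_def by (simp add: sum.reindex[OF winj])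
        also have "\<dots> = (\<Sum>c'\<in>{f..e}. if c' = c then a (w c) else 0)"
          by (rule sum.cong[OF refl]) (use coord c in auto)
        also have "\<dots> = a (w c)" using c by simp
        finally show "a x = 0" using x by simp
      qed
    qed
    show "K.span W = mat_kernel (A_mat n k)"
    proof (rule equalityI)
      show "K.span W \<subseteq> mat_kernel (A_mat n k)" using K.Ker.span_is_subset2[OF Wker] by simp
      show "mat_kernel (A_mat n k) \<subseteq> K.span W"
      proof
        fix v assume v: "v \<in> mat_kernel (A_mat n k)"
        define a where "a b = v $ (inv_into {f..e} w b - 1)" for b
        define L where "L = K.lincomb a W"
        have Lker: "L \<in> mat_kernel (A_mat n k)" unfolding L_def using Wker by auto
        have vc: "v \<in> carrier_vec n" using mat_kernelD[OF A_carrier v] by simp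
        have Lc: "L \<in> carrier_vec n" using mat_kernelD[OF A_carrier Lker] by simp
        have dker: "v - L \<in> mat_kernel (A_mat n k)"
        proof (rule mat_kernelI[OF A_carrier])
          show "v - L \<in> carrier_vec n" using vc Lc by simp
          have "A_mat n k *\<^sub>v (v - L) = A_mat n k *\<^sub>v v - A_mat n k *\<^sub>v L"
            using vc Lc by (simp add: mult_minus_distrib_mat_vec[OF A_carrier])
          also have "\<dots> = 0\<^sub>v n" using mat_kernelD[OF A_carrier v] mat_kernelD[OF A_carrier Lker] by simp
          finally show "A_mat n k *\<^sub>v (v - L) = 0\<^sub>v n" .
        qed
        have "v - L = 0\<^sub>v n"
        proof (rule uniq[OF dker], intro ballI)
          fix c assume c: "c \<in> {f..e}"
          have cn: "c - 1 < n" using c T nk by auto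
          have "L $ (c - 1) = (\<Sum>y\<in>W. a y * y $ (c - 1))" unfolding L_def by (rule K.lincomb_index[OF cn Wker])
          also have "\<dots> = (\<Sum>c'\<in>{f..e}. a (w c') * w c' $ (c - 1))"
            unfolding W_def by (simp add: sum.reindex[OF winj])
          also have "\<dots> = (\<Sum>c'\<in>{f..e}. if c' = c then a (w c) else 0)"
            by (rule sum.cong[OF refl]) (use coord c in auto)
          also have "\<dots> = a (w c)" using c by simp
          also have "\<dots> = v $ (c - 1)" unfolding a_def using inv_into_f_f[OF winj c] by simp
          finally show "(v - L) $ (c - 1) = 0" using cn vc Lc by simp
        qed
        then have "v = L" proof -
          assume d0: "v - L = 0\<^sub>v n"
          show "v = L"
          proof (rule eq_vecI)
            show "dim_vec v = dim_vec L" using vc Lc by simp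
            fix j assume "j < dim_vec L"
            then have j: "j < n" using Lc by simp
            have "(v - L) $ j = 0" using d0 j by simp
            then show "v $ j = L $ j" using j vc Lc by simp
          qed
        qed
        then show "v \<in> K.span W" unfolding L_def K.Ker.span_def W_def by auto
      qed
    qed
  qed
  have "kernel_dim (A_mat n k) = K.dim" by simp
  also have "\<dots> = card W" by (rule K.Ker.dim_basis) (auto simp: W_def basis[unfolded W_def])
  also have "\<dots> = card {f..e}" unfolding W_def by (rule card_image[OF winj])
  also have "\<dots> = e + 1 - f" by simp
  finally show ?thesis .
qed

lemma modh:
  fixes j r M :: nat and q :: int
  assumes "int j = int r + int M * q"
  shows "j mod M = r mod M"
proof -
  have "int (j mod M) = int j mod int M" by (simp add: zmod_int)
  also have "\<dots> = int r mod int M" using assms by simp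
  also have "\<dots> = int (r mod M)" by (simp add: zmod_int)
  finally show ?thesis by simp
qed

lemma modh':
  fixes j r M :: nat and q :: int
  assumes "int j = int r + int M * q" "r < M"
  shows "j mod M = r"
  using modh[OF assms(1)] assms(2) by simp

lemma C1_plus:
  fixes t k i T m :: nat and p :: "nat \<Rightarrow> real"
  assumes TT: "T = t + 1" and km: "k + 1 = T * m" and it: "i \<le> t" and t2: "2 \<le> t"
    and p0: "p 0 = 0" and c: "condn (t*k+i) k p"
  shows "(\<forall>a\<le>k. p a = p (a mod T)) \<and> (\<forall>d<T. (d < i+1 \<or> t < d) \<longrightarrow> p d = 0)"
proof -
  have m1: "1 \<le> m" using km TT by (cases m) auto
  have Tk: "T \<le> k + 1" using km m1 by simp
  have ikm: "int k = int T * int m - 1" using km by (metis add_diff_cancel_right' of_nat_1 of_nat_add of_nat_mult)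
  have cc: "p (j mod k + 1) = p (j mod (k+1))" if "t*k+i \<le> j" "j < t*k+i+k" for j
    using c that unfolding condn_def by blast
  have A: "a \<le> k \<longrightarrow> p a = p (a mod T)" for a
  proof (induction a rule: less_induct)
    case (less a)
    show ?case
    proof
      assume ak: "a \<le> k"
      show "p a = p (a mod T)"
      proof (cases "a < T")
        case True then show ?thesis by simp
      next
        case False
        define j where "j = t*k + (a - 1)"
        have ij: "int j = int t * int k + int a - 1" using False TT unfolding j_def by (simp add: of_nat_diff)
        have j1: "j mod k = a - 1"
          by (rule modh'[where q="int t"]) (use ij False TT ak in \<open>auto simp: algebra_simps\<close>)
        have j2: "j mod (k+1) = a - T"
          by (rule modh'[where q="int t"]) (use ij False TT ak in \<open>auto simp: ikm algebra_simps of_nat_diff\<close>)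
        have "p (j mod k + 1) = p (j mod (k+1))" using cc[of j] False TT it ak unfolding j_def by auto
        then have "p a = p (a - T)" using j1 j2 False TT by simp
        also have "\<dots> = p ((a - T) mod T)" using less.IH[of "a - T"] False ak TT by auto
        also have "(a - T) mod T = a mod T" using False by (simp add: le_mod_geq)
        finally show ?thesis .
      qed
    qed
  qed
  have B: "d \<le> i \<longrightarrow> p d = 0" for d
  proof (induction d)
    case 0 then show ?case using p0 by simp
  next
    case (Suc d)
    show ?case
    proof
      assume di: "Suc d \<le> i"
      define j where "j = T*k + d"
      have tk: "t \<le> k" using Tk TT by simp
      have j1: "j mod k = d"
        by (rule modh'[where q="int T"]) (use di it tk in \<open>auto simp: j_def algebra_simps\<close>)
      have "p (j mod k + 1) = p (j mod (k+1))" using cc[of j] di it tk TT unfolding j_def by auto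
      then have "p (Suc d) = p (j mod (k+1))" using j1 by simp
      also have "\<dots> = p (j mod (k+1) mod T)" using A[of "j mod (k+1)"] by simp
      also have "j mod (k+1) mod T = j mod T"
        using km by (simp add: mod_mod_cancel)
      also have "j mod T = d"
        by (rule modh'[where q="int k"]) (use di it TT in \<open>auto simp: j_def algebra_simps\<close>)
      finally show "p (Suc d) = 0" using Suc di by simp
    qed
  qed
  show ?thesis using A B TT by auto
qed


lemma C2_plus:
  fixes t k i T m :: nat and h :: "nat \<Rightarrow> real"
  assumes TT: "T = t + 1" and km: "k + 1 = T * m" and it: "i \<le> t" and t2: "2 \<le> t"
    and hz: "\<forall>d. (d < i+1 \<or> t < d) \<longrightarrow> h d = 0"
  shows "condn (t*k+i) k (\<lambda>a. h (a mod T))"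
  unfolding condn_def
proof (intro allI impI)
  fix j assume j: "t*k+i \<le> j" "j < t*k+i+k"
  have m1: "1 \<le> m" using km TT by (cases m) auto
  have Tk: "T \<le> k + 1" using km m1 by simp
  have tk: "t \<le> k" using Tk TT by simp
  have ikm: "int k = int T * int m - 1" using km by (metis add_diff_cancel_right' of_nat_1 of_nat_add of_nat_mult)
  define s where "s = j - (t*k+i)"
  have js: "j = t*k + i + s" and sk: "s < k" using j unfolding s_def by auto
  have jT: "j mod (k+1) mod T = j mod T" using km by (simp add: mod_mod_cancel)
  show "h ((j mod k + 1) mod T) = h (j mod (k + 1) mod T)"
  proof (cases "i + s < k")
    case True
    have j1: "j mod k = i + s"
      by (rule modh'[where q="int t"]) (use js True in \<open>auto simp: algebra_simps\<close>)
    have j2: "j mod T = (i + s + 1) mod T"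
      by (rule modh[where q="int t * int m - 1"]) (use js TT in \<open>auto simp: ikm algebra_simps\<close>)
    show ?thesis using j1 j2 jT by simp
  next
    case False
    define x where "x = i + s - k + 1"
    have x: "1 \<le> x" "x \<le> i" "i + s = x - 1 + k" using False sk unfolding x_def by auto
    have j1: "j mod k = x - 1"
      by (rule modh'[where q="int t + 1"]) (use js x it tk in \<open>auto simp: algebra_simps\<close>)
    have xi: "int i + int s = int k + int x - 1" using x by linarith
    have x1: "int (x - 1) = int x - 1" using x by simp
    have j2: "j mod T = x - 1"
      by (rule modh'[where q="int t * int m - 1 + int m"]) (use js x xi x1 TT it in \<open>auto simp: ikm algebra_simps of_nat_diff\<close>)
    have "(j mod k + 1) mod T = x" using j1 x it TT by simp
    then show ?thesis using jT j2 hz x by simp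
  qed
qed

lemma C1_minus:
  fixes t k i T m :: nat and p :: "nat \<Rightarrow> real"
  assumes TT: "T = t + 1" and km: "k + 1 = T * m" and it: "i \<le> t" and t2: "2 \<le> t"
    and p0: "p 0 = 0" and c: "condn (t*k-i) k p"
  shows "(\<forall>a\<le>k. p a = p (a mod T)) \<and> (\<forall>d<T. (d < 1 \<or> t - i < d) \<longrightarrow> p d = 0)"
proof -
  have m1: "1 \<le> m" using km TT by (cases m) auto
  have Tk: "T \<le> k + 1" using km m1 by simp
  have tk: "t \<le> k" using Tk TT by simp
  have tkT: "t + 1 \<le> t * k"
  proof -
    have "t * 2 \<le> t * k" using tk t2 by (intro mult_le_mono2) simp
    then show ?thesis using t2 by linarith
  qed
  have ik: "i \<le> t * k" using it tk t2 tkT by linarith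
  have ikm: "int k = int T * int m - 1" using km by (metis add_diff_cancel_right' of_nat_1 of_nat_add of_nat_mult)
  have cc: "p (j mod k + 1) = p (j mod (k+1))" if "t*k-i \<le> j" "j < t*k-i+k" for j
    using c that unfolding condn_def by blast
  have A: "a \<le> k \<longrightarrow> p a = p (a mod T)" for a
  proof (induction a rule: less_induct)
    case (less a)
    show ?case
    proof
      assume ak: "a \<le> k"
      show "p a = p (a mod T)"
      proof (cases "a < T")
        case True then show ?thesis by simp
      next
        case False
        show ?thesis
        proof (cases "a + i \<le> k")
          case True
          define j where "j = t*k + (a - 1)"
          have ij: "int j = int t * int k + int a - 1" using False TT unfolding j_def by (simp add: of_nat_diff)
          have j1: "j mod k = a - 1"
            by (rule modh'[where q="int t"]) (use ij False TT ak in \<open>auto simp: algebra_simps\<close>)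
          have j2: "j mod (k+1) = a - T"
            by (rule modh'[where q="int t"]) (use ij False TT ak in \<open>auto simp: ikm algebra_simps of_nat_diff\<close>)
          have "p (j mod k + 1) = p (j mod (k+1))" using cc[of j] False TT True ak unfolding j_def by auto
          then have "p a = p (a - T)" using j1 j2 False TT by simp
          also have "\<dots> = p ((a - T) mod T)" using less.IH[of "a - T"] False ak TT by auto
          also have "(a - T) mod T = a mod T" using False by (simp add: le_mod_geq)
          finally show ?thesis .
        next
          case False2: False
          have m2: "2 \<le> m"
          proof (rule ccontr)
            assume "\<not> 2 \<le> m"
            then have "m = 1" using m1 by simp
            then show False using km False ak TT by simp
          qed
          have kT: "2 * T \<le> k + 1" using km m2 by simp
          define c where "c = a - (k + 1 - T)"
          have c: "1 \<le> c" "c \<le> t" "c < a" "a = c + (k + 1 - T)" using False2 ak it TT kT unfolding c_def by auto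
          define j where "j = t*k + (c - 1)"
          have ij: "int j = int t * int k + int c - 1" using c unfolding j_def by (simp add: of_nat_diff)
          have j1: "j mod k = c - 1"
            by (rule modh'[where q="int t"]) (use ij c tk in \<open>auto simp: algebra_simps\<close>)
          have j2: "j mod (k+1) = a"
            by (rule modh'[where q="int t - 1"]) (use ij c ak TT kT in \<open>auto simp: algebra_simps of_nat_diff\<close>)
          have "p (j mod k + 1) = p (j mod (k+1))" using cc[of j] c it kT TT ik unfolding j_def by auto
          then have "p c = p a" using j1 j2 c by simp
          moreover have "p c = p (c mod T)" using less.IH[of c] c ak by auto
          moreover have "a mod T = c mod T"
            by (rule modh[where q="int m - 1"]) (use c TT kT in \<open>auto simp: ikm algebra_simps of_nat_diff\<close>)
          ultimately show ?thesis by simp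
        qed
      qed
    qed
  qed
  have B: "l < i \<longrightarrow> p (t - l) = 0" for l
  proof (induction l)
    case 0 show ?case
    proof
      assume i0: "0 < i"
      define j where "j = t*k - 1"
      have ij: "int j = int t * int k - 1" using tk t2 unfolding j_def by (simp add: of_nat_diff)
      have j1: "j mod k = k - 1"
        by (rule modh'[where q="int t - 1"]) (use ij tk t2 in \<open>auto simp: algebra_simps of_nat_diff\<close>)
      have "p (j mod k + 1) = p (j mod (k+1))" using cc[of j] i0 it tk t2 ik unfolding j_def by auto
      then have "p k = p (j mod (k+1))" using j1 tk t2 by simp
      also have "\<dots> = p (j mod (k+1) mod T)" using A[of "j mod (k+1)"] by simp
      also have "j mod (k+1) mod T = j mod T" using km by (simp add: mod_mod_cancel)
      also have "j mod T = 0"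
        by (rule modh'[where q="int t * int m - 1"]) (use ij TT in \<open>auto simp: ikm algebra_simps\<close>)
      finally have "p k = 0" using p0 by simp
      moreover have "p k = p (k mod T)" using A[of k] by simp
      moreover have "k mod T = t"
        by (rule modh'[where q="int m - 1"]) (use TT in \<open>auto simp: ikm algebra_simps\<close>)
      ultimately show "p (t - 0) = 0" by simp
    qed
  next
    case (Suc l)
    show ?case
    proof
      assume li: "Suc l < i"
      define d where "d = t - Suc l"
      have d: "1 \<le> d" "d < t" "d + Suc l = t" using li it unfolding d_def by auto
      define j where "j = t*k - (T - d)"
      have Tdt: "T - d \<le> t * k" using tkT TT by simp
      have ij: "int j = int t * int k + int d - int T" using d TT Tdt unfolding j_def
        by (simp add: of_nat_diff)
      have j1: "j mod k = k + d - T"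
        by (rule modh'[where q="int t - 1"]) (use ij d tk t2 TT Tk in \<open>auto simp: algebra_simps of_nat_diff\<close>)
      have nj: "t*k - i \<le> j" "j < t*k - i + k" using d li it TT ik tkT tk unfolding j_def by linarith+
      have "p (j mod k + 1) = p (j mod (k+1))" using cc[OF nj] by simp
      moreover have "p (j mod k + 1) = p d"
      proof -
        have x: "j mod k + 1 \<le> k" using j1 d TT tk by simp
        have "p (j mod k + 1) = p ((j mod k + 1) mod T)" using A x by simp
        also have "(j mod k + 1) mod T = d"
          by (rule modh'[where q="int m - 1"]) (use j1 d TT Tk in \<open>auto simp: ikm algebra_simps of_nat_diff\<close>)
        finally show ?thesis .
      qed
      moreover have "p (j mod (k+1)) = p (t - l)"
      proof -
        have "p (j mod (k+1)) = p (j mod (k+1) mod T)" using A[of "j mod (k+1)"] by simp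
        also have "j mod (k+1) mod T = j mod T" using km by (simp add: mod_mod_cancel)
        also have "j mod T = t - l"
          by (rule modh'[where q="int t * int m - 2"]) (use ij TT d in \<open>auto simp: ikm algebra_simps of_nat_diff\<close>)
        finally show ?thesis .
      qed
      ultimately show "p (t - Suc l) = 0" using Suc li d_def by simp
    qed
  qed
  have B2: "p d = 0" if "d < T" "d < 1 \<or> t - i < d" for d
  proof (cases "d < 1")
    case True then show ?thesis using p0 by simp
  next
    case False
    then have "t - d < i" "d = t - (t - d)" using that TT it by auto
    then show ?thesis using B[of "t - d"] by simp
  qed
  show ?thesis using A B2 by auto
qed


lemma C2_minus:
  fixes t k i T m :: nat and h :: "nat \<Rightarrow> real"
  assumes TT: "T = t + 1" and km: "k + 1 = T * m" and it: "i \<le> t" and t2: "2 \<le> t"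
    and hz: "\<forall>d. (d < 1 \<or> t - i < d) \<longrightarrow> h d = 0"
  shows "condn (t*k-i) k (\<lambda>a. h (a mod T))"
  unfolding condn_def
proof (intro allI impI)
  fix j assume j: "t*k-i \<le> j" "j < t*k-i+k"
  have m1: "1 \<le> m" using km TT by (cases m) auto
  have Tk: "T \<le> k + 1" using km m1 by simp
  have tk: "t \<le> k" using Tk TT by simp
  have tkT: "t + 1 \<le> t * k"
  proof -
    have "t * 2 \<le> t * k" using tk t2 by (intro mult_le_mono2) simp
    then show ?thesis using t2 by linarith
  qed
  have ik: "i \<le> t * k" using it tkT by linarith
  have ikm: "int k = int T * int m - 1" using km by (metis add_diff_cancel_right' of_nat_1 of_nat_add of_nat_mult)
  define s where "s = j - (t*k-i)"
  have js: "j = t*k - i + s" and sk: "s < k" using j unfolding s_def by auto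
  have ij: "int j = int t * int k - int i + int s" using js ik by (simp add: of_nat_diff)
  have jT: "j mod (k+1) mod T = j mod T" using km by (simp add: mod_mod_cancel)
  show "h ((j mod k + 1) mod T) = h (j mod (k + 1) mod T)"
  proof (cases "i \<le> s")
    case True
    have si: "int (s - i) = int s - int i" using True by simp
    have j1: "j mod k = s - i"
      by (rule modh'[where q="int t"]) (use ij si sk in \<open>auto simp: algebra_simps\<close>)
    have j2: "j mod T = (s - i + 1) mod T"
      by (rule modh[where q="int t * int m - 1"]) (use ij si TT in \<open>auto simp: ikm algebra_simps\<close>)
    show ?thesis using j1 j2 jT by simp
  next
    case False
    have ki: "int (k - i + s) = int k - int i + int s" using it tk by simp
    have j1: "j mod k = k - i + s"
      by (rule modh'[where q="int t - 1"]) (use ij ki False it tk in \<open>auto simp: algebra_simps of_nat_diff\<close>)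
    have Tis: "int (T - i + s) = int T - int i + int s" using it TT by simp
    have x: "(j mod k + 1) mod T = T - i + s"
      by (rule modh'[where q="int m - 1"]) (use j1 ki Tis False TT it tk in \<open>auto simp: ikm algebra_simps of_nat_diff\<close>)
    have "t - i < T - i + s" using it TT by simp
    then have hx: "h ((j mod k + 1) mod T) = 0" unfolding x using hz by blast
    have hy: "h (j mod T) = 0"
    proof (cases "s + 1 = i")
      case True
      have "j mod T = 0"
        by (rule modh'[where q="int t * int m - 1"]) (use ij True TT in \<open>auto simp: ikm algebra_simps\<close>)
      then show ?thesis using hz by simp
    next
      case False2: False
      have Tis1: "int (T + 1 - i + s) = int T + 1 - int i + int s" using it TT by simp
      have "j mod T = T + 1 - i + s"
        by (rule modh'[where q="int t * int m - 2"]) (use ij Tis1 False False2 TT it in \<open>auto simp: ikm algebra_simps of_nat_diff\<close>)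
      moreover have "t - i < T + 1 - i + s" using it TT by simp
      ultimately show ?thesis using hz by simp
    qed
    show ?thesis using hx hy jT by simp
  qed
qed

lemma special_8_2: "kernel_dim (A_mat 8 2) = 0"
proof -
  have "kernel_dim (A_mat 8 2) = 0 + 1 - 1"
  proof (rule generic_dim[where T=3])
    fix p :: "nat \<Rightarrow> real" assume p0: "p 0 = 0" and c: "condn 8 2 p"
    have "p 1 = p 2" using c[unfolded condn_def, rule_format, of 8] by simp
    moreover have "p (9 mod 2 + 1) = p (9 mod (2+1))" using c[unfolded condn_def, rule_format, of 9] by simp
    then have "p (Suc (Suc 0)) = p 0" by simp
    then have "p 2 = p 0" by (simp add: numeral_2_eq_2)
    ultimately have z: "p 0 = 0" "p 1 = 0" "p 2 = 0" using p0 by auto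
    have "p d = 0" if "d < 3" for d
    proof -
      have "d = 0 \<or> d = 1 \<or> d = 2" using that by auto
      then show ?thesis using z by auto
    qed
    then show "(\<forall>a\<le>2. p a = p (a mod 3)) \<and> (\<forall>d<3. (d < 1 \<or> 0 < d) \<longrightarrow> p d = 0)" by auto
  next
    fix h :: "nat \<Rightarrow> real" assume "\<forall>d. (d < 1 \<or> 0 < d) \<longrightarrow> h d = 0"
    then have "h d = 0" for d by auto
    then show "condn 8 2 (\<lambda>a. h (a mod 3))" unfolding condn_def by simp
  qed auto
  then show ?thesis by simp
qed

theorem theorem8p7:
  fixes t k :: nat and i :: int
  assumes "t \<ge> 2" and "k \<ge> 2" and "(t + 1) dvd (k + 1)"
    and "0 \<le> i" and "i \<le> int t"
  shows "N (int t * int k + i) k = nat (int t - i) \<and> N (int t * int k - i) k = nat (int t - i)"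
proof -
  define i' where "i' = nat i"
  have ii: "i = int i'" using assms(4) unfolding i'_def by simp
  have it: "i' \<le> t" using assms(5) ii by simp
  obtain m where km: "k + 1 = (t + 1) * m" using assms(3) by (auto elim: dvdE)
  have m1: "1 \<le> m" using km by (cases m) auto
  have Tk: "t + 1 \<le> k + 1" using km m1 by (metis dvd_imp_le assms(3) zero_less_Suc add.commute plus_1_eq_Suc)
  have tk: "t \<le> k" using Tk by simp
  have k2: "2 * k \<le> t * k" using assms(1) by (intro mult_le_mono1)
  have ik: "i' \<le> t * k" using it k2 assms(1) assms(2) tk by linarith
  have res: "nat (int t - i) = t - i'" using ii it by simp
  have plus: "N (int t * int k + i) k = t - i'"
  proof -
    have eq: "int t * int k + i = int (t * k + i')" using ii by simp
    have nk: "k < t * k + i'" using k2 assms(2) by linarith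
    then have gt: "int (t * k + i') > int k" by (simp only: of_nat_less_iff)
    have "N (int t * int k + i) k = kernel_dim (A_mat (t*k+i') k)"
      unfolding eq N_def nullity_A_def by (simp only: gt if_True nat_int)
    also have "\<dots> = t + 1 - (i' + 1)"
    proof (rule generic_dim[where T="t+1"])
      fix p :: "nat \<Rightarrow> real" assume "p 0 = 0" "condn (t*k+i') k p"
      then show "(\<forall>a\<le>k. p a = p (a mod (t+1))) \<and> (\<forall>d<t+1. (d < i'+1 \<or> t < d) \<longrightarrow> p d = 0)"
        using C1_plus[OF refl km it assms(1)] by blast
    next
      fix h :: "nat \<Rightarrow> real" assume "\<forall>d. (d < i'+1 \<or> t < d) \<longrightarrow> h d = 0"
      then show "condn (t*k+i') k (\<lambda>a. h (a mod (t+1)))"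
        using C2_plus[OF refl km it assms(1)] by blast
    qed (use assms(2) nk Tk in auto)
    finally show ?thesis by simp
  qed
  have minus: "N (int t * int k - i) k = t - i'"
  proof -
    have eq: "int t * int k - i = int (t * k - i')" using ii ik by (simp add: of_nat_diff)
    show ?thesis
    proof (cases "k < t * k - i'")
      case True
      have gt: "int (t * k - i') > int k" using True by (simp only: of_nat_less_iff)
      have "N (int t * int k - i) k = kernel_dim (A_mat (t*k-i') k)"
        unfolding eq N_def nullity_A_def by (simp only: gt if_True nat_int)
      also have "\<dots> = (t - i') + 1 - 1"
      proof (rule generic_dim[where T="t+1"])
        fix p :: "nat \<Rightarrow> real" assume "p 0 = 0" "condn (t*k-i') k p"
        then show "(\<forall>a\<le>k. p a = p (a mod (t+1))) \<and> (\<forall>d<t+1. (d < 1 \<or> t - i' < d) \<longrightarrow> p d = 0)"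
          using C1_minus[OF refl km it assms(1)] by blast
      next
        fix h :: "nat \<Rightarrow> real" assume "\<forall>d. (d < 1 \<or> t - i' < d) \<longrightarrow> h d = 0"
        then show "condn (t*k-i') k (\<lambda>a. h (a mod (t+1)))"
          using C2_minus[OF refl km it assms(1)] by blast
      qed (use assms(2) True Tk in auto)
      finally show ?thesis by simp
    next
      case False
      have t2: "t = 2"
      proof (rule ccontr)
        assume "t \<noteq> 2"
        then have "3 \<le> t" using assms(1) by simp
        then have "3 * (k - 1) \<le> t * (k - 1)" by (intro mult_le_mono1)
        also have "t * (k - 1) = t * k - t" by (simp add: right_diff_distrib')
        finally show False using False it assms(2) by linarith
      qed
      have k2': "k = 2" and i2: "i' = 2" using False t2 it assms(2) by auto
      have "N (int t * int k - i) k = kernel_dim (A_mat 8 2)"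
        unfolding N_def nullity_A_def using t2 k2' i2 ii by simp
      also have "\<dots> = 0" by (rule special_8_2)
      finally show ?thesis using t2 i2 by simp
    qed
  qed
  show ?thesis using plus minus res by simp
qed

end
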